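(* Let $\mathfrak S$ be a commutative semiring with identity and let $\sigma_{\mathfrak S}$ be a set of ideals of $\mathfrak S$ containing all maximal ideals of $\mathfrak S$. Then the Iséki space $\sigma_{\mathfrak S}$ (i.e. $\sigma_{\mathfrak S}$ with the ideal topology) is quasi-compact.
   Context: A semiring $(\mathfrak S,+,0,\cdot,1)$ has $(\mathfrak S,+,0)$ a commutative monoid, $(\mathfrak S,\cdot,1)$ a monoid, $0r=r0=0$, and two-sided distributivity; all semirings are commutative. An ideal of $\mathfrak S$ is a nonempty proper subset closed under addition and under multiplication by arbitrary elements of $\mathfrak S$; a maximal ideal is an ideal not properly contained in any other ideal. For an ideal $\mathfrak a$ put $\mathfrak a^{\uparrow}=\{\mathfrak x\in\sigma_{\mathfrak S}\mid \mathfrak a\subseteq\mathfrak x\}$. The ideal topology on $\sigma_{\mathfrak S}$ is the topology for which the sets $\mathfrak a^{\uparrow}$, $\mathfrak a$ ranging over ideals of $\mathfrak S$, form a subbasis of closed sets. Quasi-compact means every open cover has a finite subcover (no Hausdorff assumption). *)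

theory Defs
  imports "HOL-Analysis.Analysis"
begin

definition is_ideal :: "'a::comm_semiring_1 set \<Rightarrow> bool" where
  "is_ideal I \<longleftrightarrow> I \<noteq> {} \<and> I \<noteq> UNIV \<and>
     (\<forall>x\<in>I. \<forall>y\<in>I. x + y \<in> I) \<and> (\<forall>r x. x \<in> I \<longrightarrow> r * x \<in> I)"

definition is_maximal_ideal :: "'a::comm_semiring_1 set \<Rightarrow> bool" where
  "is_maximal_ideal M \<longleftrightarrow> is_ideal M \<and> (\<forall>J. is_ideal J \<and> M \<subseteq> J \<longrightarrow> J = M)"

definition ideal_up :: "'a set set \<Rightarrow> 'a set \<Rightarrow> 'a set set" where
  "ideal_up \<sigma> a = {x \<in> \<sigma>. a \<subseteq> x}"

text \<open>The ideal topology on sigma: the sets a-up (a an ideal) form a subbasis of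
  closed sets, i.e. their complements in sigma form a subbasis of open sets.\<close>
definition ideal_topology :: "'a::comm_semiring_1 set set \<Rightarrow> 'a set topology" where
  "ideal_topology \<sigma> = topology (arbitrary union_of
      (finite intersection_of (\<lambda>U. \<exists>a::'a set. is_ideal a \<and> U = \<sigma> - ideal_up \<sigma> a) relative_to \<sigma>))"

lemma topspace_ideal_topology: "topspace (ideal_topology \<sigma>) = \<sigma>"
  unfolding ideal_topology_def by simp

lemma openin_ideal_topology:
  "openin (ideal_topology \<sigma>) U \<longleftrightarrow> (arbitrary union_of
      (finite intersection_of (\<lambda>U. \<exists>a::'a::comm_semiring_1 set. is_ideal a \<and> U = \<sigma> - ideal_up \<sigma> a) relative_to \<sigma>)) U"
  unfolding ideal_topology_def by (rule openin_subbase)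

end

theory Submission
  imports Defs
begin

lemma ideal_one_notin: "is_ideal (I::'a::comm_semiring_1 set) \<Longrightarrow> 1 \<notin> I"
proof
  assume I: "is_ideal I" and "1 \<in> I"
  then have "\<forall>r. r * 1 \<in> I" unfolding is_ideal_def by blast
  then have "I = UNIV" by auto
  with I show False unfolding is_ideal_def by blast
qed

lemma ideal_zero: "is_ideal (I::'a::comm_semiring_1 set) \<Longrightarrow> 0 \<in> I"
  unfolding is_ideal_def by (metis ex_in_conv mult_zero_left)

lemma ideal_add: "is_ideal I \<Longrightarrow> x \<in> I \<Longrightarrow> y \<in> I \<Longrightarrow> x + y \<in> I"
  unfolding is_ideal_def by blast
lemma ideal_mult: "is_ideal I \<Longrightarrow> x \<in> I \<Longrightarrow> r * x \<in> I"
  unfolding is_ideal_def by blast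
lemma ideal_ne: "is_ideal I \<Longrightarrow> I \<noteq> {}"
  unfolding is_ideal_def by blast

lemma exists_maximal:
  fixes J :: "'a::comm_semiring_1 set"
  assumes "is_ideal J"
  shows "\<exists>M. is_maximal_ideal M \<and> J \<subseteq> M"
proof -
  define A where "A = {I. is_ideal I \<and> J \<subseteq> I}"
  have "\<exists>M\<in>A. \<forall>X\<in>A. M \<subseteq> X \<longrightarrow> X = M"
  proof (rule subset_Zorn)
    fix C assume ch: "subset.chain A C"
    show "\<exists>U\<in>A. \<forall>X\<in>C. X \<subseteq> U"
    proof (cases "C = {}")
      case True
      have "J \<in> A" using assms unfolding A_def by simp
      then show ?thesis using True by blast
    next
      case False
      have CA0: "C \<subseteq> A" using ch by (simp add: subset.chain_def)
      have lin: "X \<subseteq> Y \<or> Y \<subseteq> X" if "X \<in> C" "Y \<in> C" for X Y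
      proof -
        have "X \<subset> Y \<or> X = Y \<or> Y \<subset> X \<or> Y = X" using ch that by (simp add: subset.chain_def)
        then show ?thesis by blast
      qed
      have CA: "\<And>X. X \<in> C \<Longrightarrow> is_ideal X \<and> J \<subseteq> X"
        using CA0 unfolding A_def by blast
      have "is_ideal (\<Union>C)"
        unfolding is_ideal_def
      proof (intro conjI ballI allI impI)
        obtain X where "X \<in> C" using False by blast
        then show "\<Union>C \<noteq> {}" using CA ideal_ne by blast
        show "\<Union>C \<noteq> UNIV"
        proof
          assume "\<Union>C = UNIV"
          then have "1 \<in> \<Union>C" by simp
          then obtain X where "X \<in> C" "1 \<in> X" by (rule UnionE)
          with CA show False using ideal_one_notin by blast
        qed
        fix x y assume "x \<in> \<Union>C" "y \<in> \<Union>C"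
        then obtain X Y where XY: "X \<in> C" "Y \<in> C" "x \<in> X" "y \<in> Y" by blast
        show "x + y \<in> \<Union>C"
        proof (cases "X \<subseteq> Y")
          case True
          then have "x + y \<in> Y" using XY CA ideal_add by blast
          then show ?thesis using XY by blast
        next
          case False
          then have "Y \<subseteq> X" using lin[OF XY(1,2)] by blast
          then have "x + y \<in> X" using XY CA ideal_add by blast
          then show ?thesis using XY by blast
        qed
      next
        fix r x assume "x \<in> \<Union>C"
        then obtain X where "X \<in> C" "x \<in> X" by blast
        then show "r * x \<in> \<Union>C" using CA ideal_mult by blast
      qed
      moreover have "J \<subseteq> \<Union>C" using False CA by blast
      ultimately show ?thesis unfolding A_def by blast
    qed
  qed
  then obtain M where M0: "M \<in> A" "\<forall>X\<in>A. M \<subseteq> X \<longrightarrow> X = M" by (rule bexE)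
  have M: "is_ideal M" "J \<subseteq> M" using M0(1) unfolding A_def by simp_all
  have M3: "X = M" if "is_ideal X" "J \<subseteq> X" "M \<subseteq> X" for X
    using M0(2) that unfolding A_def by simp
  have "is_maximal_ideal M" unfolding is_maximal_ideal_def
  proof (intro conjI allI impI)
    show "is_ideal M" by (rule M(1))
    fix K assume K: "is_ideal K \<and> M \<subseteq> K"
    then have "J \<subseteq> K" using M(2) by (rule_tac subset_trans) auto
    then show "K = M" using M3 K by simp
  qed
  with M(2) show ?thesis by (intro exI[of _ M]) simp
qed
definition gen :: "'a::comm_semiring_1 set set \<Rightarrow> 'a set" where
  "gen A = {s. \<exists>F f. finite F \<and> F \<subseteq> A \<and> (\<forall>a\<in>F. f a \<in> a) \<and> s = sum f F}"

lemma genI: "finite F \<Longrightarrow> F \<subseteq> A \<Longrightarrow> (\<And>a. a \<in> F \<Longrightarrow> f a \<in> a) \<Longrightarrow> sum f F \<in> gen A"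
  unfolding gen_def by auto

lemma genE:
  assumes "x \<in> gen A"
  obtains F f where "finite F" "F \<subseteq> A" "\<And>a. a \<in> F \<Longrightarrow> f a \<in> a" "x = sum f F"
proof -
  from assms obtain F f where H: "finite F \<and> F \<subseteq> A \<and> (\<forall>a\<in>F. f a \<in> a) \<and> x = sum f F"
    unfolding gen_def by blast
  show thesis by (rule that[of F f]) (use H in auto)
qed

lemma gen_add:
  assumes A: "\<forall>a\<in>A. is_ideal a" and x: "x \<in> gen A" and y: "y \<in> gen A"
  shows "x + y \<in> gen A"
proof -
  obtain F f where F: "finite F" "F \<subseteq> A" "\<And>a. a\<in>F \<Longrightarrow> f a \<in> a" "x = sum f F"
    using x by (elim genE) blast
  obtain G g where G: "finite G" "G \<subseteq> A" "\<And>a. a\<in>G \<Longrightarrow> g a \<in> a" "y = sum g G"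
    using y by (elim genE) blast
  define f' where "f' a = (if a \<in> F then f a else 0)" for a
  define g' where "g' a = (if a \<in> G then g a else 0)" for a
  have "sum f F = sum f' (F \<union> G)"
    unfolding f'_def using F(1) G(1) by (intro sum.mono_neutral_cong_left) auto
  moreover have "sum g G = sum g' (F \<union> G)"
    unfolding g'_def using F(1) G(1) by (intro sum.mono_neutral_cong_left) auto
  ultimately have eq: "x + y = sum (\<lambda>a. f' a + g' a) (F \<union> G)"
    using F(4) G(4) by (simp add: sum.distrib)
  have mem: "f' a + g' a \<in> a" if a: "a \<in> F \<union> G" for a
  proof -
    have "a \<in> A" using a F(2) G(2) by blast
    then have ia: "is_ideal a" using A by blast
    have "f' a \<in> a" unfolding f'_def using F(3) ideal_zero[OF ia] by auto
    moreover have "g' a \<in> a" unfolding g'_def using G(3) ideal_zero[OF ia] by auto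
    ultimately show "f' a + g' a \<in> a" by (rule ideal_add[OF ia])
  qed
  have "sum (\<lambda>a. f' a + g' a) (F \<union> G) \<in> gen A"
    by (rule genI) (use F(1,2) G(1,2) mem in auto)
  then show ?thesis using eq by simp
qed

lemma gen_mult:
  assumes A: "\<forall>a\<in>A. is_ideal a" and x: "x \<in> gen A"
  shows "r * x \<in> gen A"
proof -
  obtain F f where F: "finite F" "F \<subseteq> A" "\<And>a. a\<in>F \<Longrightarrow> f a \<in> a" "x = sum f F"
    using x by (elim genE) blast
  have eq: "r * x = sum (\<lambda>a. r * f a) F" using F(4) by (simp add: sum_distrib_left)
  have mem: "r * f a \<in> a" if "a \<in> F" for a
  proof -
    have "is_ideal a" using that F(2) A by blast
    then show ?thesis using F(3)[OF that] by (rule ideal_mult)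
  qed
  have "sum (\<lambda>a. r * f a) F \<in> gen A" by (rule genI) (use F(1,2) mem in auto)
  then show ?thesis using eq by simp
qed

lemma gen_zero: "(0::'a::comm_semiring_1) \<in> gen A"
  using genI[of "{}" A "\<lambda>_. 0"] by simp

lemma gen_sup: "a \<in> A \<Longrightarrow> a \<subseteq> gen A"
proof
  fix x assume "a \<in> A" "x \<in> a"
  then show "x \<in> gen A" using genI[of "{a}" A "\<lambda>_. x"] by simp
qed

theorem theorem3p3:
  fixes \<sigma> :: "'a::comm_semiring_1 set set"
  assumes "\<forall>I\<in>\<sigma>. is_ideal I"
    and "\<forall>M. is_maximal_ideal M \<longrightarrow> M \<in> \<sigma>"
  shows "compact_space (ideal_topology \<sigma>)"
proof -
  let ?P = "\<lambda>U. \<exists>a::'a set. is_ideal a \<and> U = \<sigma> - ideal_up \<sigma> a"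
  define B where "B = insert \<sigma> (Collect ?P)"
  have rel: "(finite intersection_of (\<lambda>x. x \<in> B) relative_to \<sigma>) =
             (finite intersection_of ?P relative_to \<sigma>)"
  proof (intro ext iffI)
    fix S assume "(finite intersection_of (\<lambda>x. x \<in> B) relative_to \<sigma>) S"
    then obtain T where T1: "S = \<sigma> \<inter> T" and T2: "(finite intersection_of (\<lambda>x. x \<in> B)) T"
      unfolding relative_to_def by blast
    from T2 obtain \<U> where U: "finite \<U>" "\<U> \<subseteq> B" "\<Inter>\<U> = T"
      unfolding intersection_of_def by blast
    have e: "\<sigma> \<inter> \<Inter>\<U> = \<sigma> \<inter> \<Inter>(\<U> - {\<sigma>})" by blast
    have sub: "\<U> - {\<sigma>} \<subseteq> Collect ?P" using U(2) unfolding B_def by blast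
    have "(finite intersection_of ?P) (\<Inter>(\<U> - {\<sigma>}))"
      unfolding intersection_of_def
      by (rule exI[of _ "\<U> - {\<sigma>}"]) (use U(1) sub in auto)
    then show "(finite intersection_of ?P relative_to \<sigma>) S"
      unfolding relative_to_def using T1 U(3) e by blast
  next
    fix S assume "(finite intersection_of ?P relative_to \<sigma>) S"
    then obtain T where T1: "S = \<sigma> \<inter> T" and T2: "(finite intersection_of ?P) T"
      unfolding relative_to_def by blast
    from T2 obtain \<U> where U: "finite \<U>" "\<U> \<subseteq> Collect ?P" "\<Inter>\<U> = T"
      unfolding intersection_of_def by blast
    have sub: "\<U> \<subseteq> B" using U(2) unfolding B_def by blast
    have "(finite intersection_of (\<lambda>x. x \<in> B)) T"
      unfolding intersection_of_def
      by (rule exI[of _ "\<U>"]) (use U(1,3) sub in auto)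
    then show "(finite intersection_of (\<lambda>x. x \<in> B) relative_to \<sigma>) S"
      unfolding relative_to_def using T1 by blast
  qed
  show ?thesis
  proof (rule Alexander_subbase_alt[where U = \<sigma> and \<B> = B])
    show "\<sigma> \<subseteq> \<Union>B" unfolding B_def by blast
    show "topology (arbitrary union_of (finite intersection_of (\<lambda>x. x \<in> B) relative_to \<sigma>))
          = ideal_topology \<sigma>"
      unfolding rel ideal_topology_def ..
  next
    fix C assume CB: "C \<subseteq> B" and cov: "\<sigma> \<subseteq> \<Union>C"
    show "\<exists>C'. finite C' \<and> C' \<subseteq> C \<and> \<sigma> \<subseteq> \<Union>C'"
    proof (cases "\<sigma> \<in> C")
      case True then show ?thesis by (intro exI[of _ "{\<sigma>}"]) auto
    next
      case False
      define A where "A = {a. is_ideal a \<and> \<sigma> - ideal_up \<sigma> a \<in> C}"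
      have CA: "C = (\<lambda>a. \<sigma> - ideal_up \<sigma> a) ` A"
      proof
        show "C \<subseteq> (\<lambda>a. \<sigma> - ideal_up \<sigma> a) ` A"
        proof
          fix c assume c: "c \<in> C"
          then have "c \<in> Collect ?P" using CB False unfolding B_def by blast
          then obtain a where a: "is_ideal a" "c = \<sigma> - ideal_up \<sigma> a" by blast
          then have "a \<in> A" unfolding A_def using c by simp
          then show "c \<in> (\<lambda>a. \<sigma> - ideal_up \<sigma> a) ` A" using a(2) by (rule rev_image_eqI)
        qed
        show "(\<lambda>a. \<sigma> - ideal_up \<sigma> a) ` A \<subseteq> C" unfolding A_def by blast
      qed
      have Aid: "\<forall>a\<in>A. is_ideal a" unfolding A_def by simp
      have "1 \<in> gen A"
      proof (rule ccontr)
        assume n1: "1 \<notin> gen A"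
        have "is_ideal (gen A)" unfolding is_ideal_def
        proof (intro conjI ballI allI impI)
          show "gen A \<noteq> {}" using gen_zero by blast
          show "gen A \<noteq> UNIV" using n1 by blast
        qed (auto intro: gen_add[OF Aid] gen_mult[OF Aid])
        then obtain M where M: "is_maximal_ideal M" "gen A \<subseteq> M"
          using exists_maximal by blast
        then have Ms: "M \<in> \<sigma>" using assms(2) by blast
        with cov obtain c where "c \<in> C" "M \<in> c" by blast
        then obtain a where a: "a \<in> A" "M \<in> \<sigma> - ideal_up \<sigma> a" using CA by blast
        have "a \<subseteq> M" using gen_sup[OF a(1)] M(2) by (rule subset_trans)
        then have "M \<in> ideal_up \<sigma> a" using Ms unfolding ideal_up_def by simp
        then show False using a(2) by simp
      qed
      then obtain F f where F: "finite F" "F \<subseteq> A" "\<And>a. a\<in>F \<Longrightarrow> f a \<in> a" "1 = sum f F"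
        by (elim genE) blast
      have "\<sigma> \<subseteq> \<Union>((\<lambda>a. \<sigma> - ideal_up \<sigma> a) ` F)"
      proof
        fix x assume x: "x \<in> \<sigma>"
        show "x \<in> \<Union>((\<lambda>a. \<sigma> - ideal_up \<sigma> a) ` F)"
        proof (rule ccontr)
          assume nx: "\<not> ?thesis"
          have sub: "a \<subseteq> x" if "a \<in> F" for a
          proof -
            have "x \<notin> \<sigma> - ideal_up \<sigma> a" using nx that by blast
            then show ?thesis using x unfolding ideal_up_def by simp
          qed
          have ix: "is_ideal x" using x assms(1) by blast
          have "\<forall>G. G \<subseteq> F \<longrightarrow> sum f G \<in> x"
          proof (intro allI impI)
            fix G assume "G \<subseteq> F"
            then have "finite G" using F(1) finite_subset by blast
            then show "sum f G \<in> x" using \<open>G \<subseteq> F\<close>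
            proof (induction G rule: finite_induct)
              case empty then show ?case using ideal_zero[OF ix] by simp
            next
              case (insert b G)
              then have b: "b \<in> F" and G: "G \<subseteq> F" by auto
              have "f b \<in> x" using sub[OF b] F(3)[OF b] by blast
              moreover have "sum f G \<in> x" using insert.IH G by blast
              ultimately have "f b + sum f G \<in> x" by (rule ideal_add[OF ix])
              then show ?case using insert.hyps by simp
            qed
          qed
          then have "sum f F \<in> x" by blast
          then have "1 \<in> x" using F(4) by simp
          then show False using ideal_one_notin[OF ix] by blast
        qed
      qed
      moreover have "(\<lambda>a. \<sigma> - ideal_up \<sigma> a) ` F \<subseteq> C" using F(2) CA by blast
      ultimately show ?thesis using F(1) by blast
    qed
  qed
qed

end
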